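(* For every integer $n\ge 1$, the restriction to $\mathfrak{sp}(2n)$ of the functional $$F_n=\sum_{i=1}^{n}\sum_{j=1}^{n+1-i}e_{i,j}^*$$ is regular on $C_n=\mathfrak{sp}(2n)$, i.e. the kernel of its Kirillov form on $\mathfrak{sp}(2n)$ has dimension $n$.
   Context: Over $\mathbb{C}$. $e_{i,j}^*(X)=X_{i,j}$. For an $n\times n$ matrix $M$, let $M^{\hat t}$ denote its transpose across the antidiagonal, $(M^{\hat t})_{i,j}=M_{n+1-j,n+1-i}$. Here $\mathfrak{sp}(2n)$ denotes the Lie algebra of $2n\times 2n$ matrices of the block form $\begin{pmatrix}A&B\\ C&-A^{\hat t}\end{pmatrix}$ with $A,B,C$ arbitrary $n\times n$ matrices subject to $B^{\hat t}=B$, $C^{\hat t}=C$ (equivalently, spanned by $e_{i,j}-e_{2n+1-j,2n+1-i}$ for $1\le i,j\le n$, and $e_{i,j}+e_{2n+1-j,2n+1-i}$ for $i\le n<j$ or $j\le n<i$). For $f\in\mathfrak{g}^*$, $B_f(x,y)=f([x,y])$, $\ker(B_f)=\{x\in\mathfrak{g}: f([x,y])=0\ \forall y\in\mathfrak{g}\}$, and $f$ is regular if $\dim\ker(B_f)=\operatorname{ind}\mathfrak{g}:=\min_{g\in\mathfrak{g}^*}\dim\ker(B_g)$. It is known that $\operatorname{ind}\mathfrak{sp}(2n)=n$. *)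

theory Defs
  imports Complex_Main "HOL-Library.Function_Algebras"
begin

text \<open>Square matrices of size 2n are modelled as functions nat => nat => complex,
  1-based indices in {1..2n}, and zero outside that range.\<close>

definition mscale :: "complex \<Rightarrow> (nat \<Rightarrow> nat \<Rightarrow> complex) \<Rightarrow> (nat \<Rightarrow> nat \<Rightarrow> complex)" where
  "mscale c M = (\<lambda>i j. c * M i j)"

definition mmult :: "nat \<Rightarrow> (nat \<Rightarrow> nat \<Rightarrow> complex) \<Rightarrow> (nat \<Rightarrow> nat \<Rightarrow> complex) \<Rightarrow> (nat \<Rightarrow> nat \<Rightarrow> complex)" where
  "mmult m X Y = (\<lambda>i j. \<Sum>k=1..m. X i k * Y k j)"

definition lie_bracket :: "nat \<Rightarrow> (nat \<Rightarrow> nat \<Rightarrow> complex) \<Rightarrow> (nat \<Rightarrow> nat \<Rightarrow> complex) \<Rightarrow> (nat \<Rightarrow> nat \<Rightarrow> complex)" where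
  "lie_bracket m X Y = (\<lambda>i j. mmult m X Y i j - mmult m Y X i j)"

text \<open>sp(2n): block matrices (A B; C -A^t') with B^t' = B, C^t' = C, where ^t' is the
  antidiagonal transpose.\<close>

definition sp :: "nat \<Rightarrow> (nat \<Rightarrow> nat \<Rightarrow> complex) set" where
  "sp n = {M. (\<forall>i j. \<not> (i \<in> {1..2*n} \<and> j \<in> {1..2*n}) \<longrightarrow> M i j = 0) \<and>
     (\<forall>i\<in>{1..2*n}. \<forall>j\<in>{1..2*n}.
        M i j = (if (i \<le> n) = (j \<le> n) then -1 else 1) * M (2*n+1-j) (2*n+1-i))}"

definition F :: "nat \<Rightarrow> (nat \<Rightarrow> nat \<Rightarrow> complex) \<Rightarrow> complex" where
  "F n X = (\<Sum>i=1..n. \<Sum>j=1..n+1-i. X i j)"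

definition kirillov_kernel :: "nat \<Rightarrow> (nat \<Rightarrow> nat \<Rightarrow> complex) set" where
  "kirillov_kernel n = {x \<in> sp n. \<forall>y \<in> sp n. F n (lie_bracket (2*n) x y) = 0}"

end

theory Submission
  imports Defs
begin

lemma Z_core:
  fixes R :: "nat \<Rightarrow> nat \<Rightarrow> complex" and n :: nat
  assumes anti: "\<And>u v. 1\<le>u \<Longrightarrow> u\<le>n \<Longrightarrow> 1\<le>v \<Longrightarrow> v\<le>n \<Longrightarrow> R u v = - R v u"
    and zero: "\<And>u. R u 0 = 0"
    and tau: "\<And>u j. 1\<le>u \<Longrightarrow> u\<le>n \<Longrightarrow> 1\<le>j \<Longrightarrow> j\<le>n \<Longrightarrow>
               R u j - R u (j-1) = R (n+1-j) (n+1-u) - R (n+1-j) (n-u)"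
  shows "\<And>u v. 1\<le>u \<Longrightarrow> u\<le>n \<Longrightarrow> 1\<le>v \<Longrightarrow> v\<le>n \<Longrightarrow> R u v = 0"
proof -
  define P where "P s = (\<forall>u v. 1\<le>u \<longrightarrow> u\<le>n \<longrightarrow> 1\<le>v \<longrightarrow> v\<le>n \<longrightarrow> (u+v = s \<or> u+v = 2*n+1-s) \<longrightarrow> R u v = 0)" for s
  have P1: "P 1"
  proof -
    have "R n n = 0" if "1 \<le> n" using anti[of n n] that by simp
    then show ?thesis unfolding P_def by (auto dest: le_antisym)
  qed
  have Pstep: "P s" if s2: "2 \<le> s" and sn: "s \<le> n" and IH: "P (s-1)" for s
  proof -
    have eq1: "R u j = - R (n+1-j) (n-u)" if "1 \<le> u" "1 \<le> j" "u + j = s" for u j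
    proof -
      have t: "R u j - R u (j-1) = R (n+1-j) (n+1-u) - R (n+1-j) (n-u)"
        using tau[of u j] that sn by simp
      have z1: "R u (j-1) = 0"
      proof (cases "j = 1")
        case True then show ?thesis using zero by simp
      next
        case False
        have "u + (j-1) = s - 1" "j - 1 \<ge> 1" "u \<le> n" "j - 1 \<le> n" using that False sn by auto
        then show ?thesis using IH[unfolded P_def, rule_format, of u "j-1"] that by simp
      qed
      have z2: "R (n+1-j) (n+1-u) = 0"
        proof -
        have "(n+1-j) + (n+1-u) = 2*n+1-(s-1)" "1 \<le> n+1-j" "n+1-j \<le> n" "1 \<le> n+1-u" "n+1-u \<le> n"
          using that sn by auto
        then show ?thesis using IH[unfolded P_def, rule_format, of "n+1-j" "n+1-u"] by simp
      qed
      show ?thesis using t z1 z2 by simp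
    qed
    have chain: "R u (s-u) = R 1 (s-1)" if "1 \<le> u" "u \<le> s-1" for u
      using that
    proof (induction u)
      case 0 then show ?case by simp
    next
      case (Suc w)
      show ?case
      proof (cases "w = 0")
        case True then show ?thesis by simp
      next
        case False
        then have w1: "1 \<le> w" "w \<le> s-1" using Suc by auto
        have A: "R (Suc w) (s - Suc w) = R (n-w) (n+1-s+w)"
        proof -
          have pr: "1 \<le> s - Suc w" "1 \<le> Suc w" "(s - Suc w) + Suc w = s" using Suc.prems by auto
          have X: "R (s - Suc w) (Suc w) = - R (n+1-Suc w) (n-(s-Suc w))"
            by (rule eq1[OF pr])
          have Y: "R (Suc w) (s - Suc w) = - R (s - Suc w) (Suc w)"
            using anti[of "Suc w" "s - Suc w"] Suc.prems sn by simp
          have e: "n+1-Suc w = n-w" "n-(s-Suc w) = n+1-s+w" using Suc.prems sn by auto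
          show ?thesis using X Y unfolding e by simp
        qed
        have B: "R w (s-w) = R (n-w) (n+1-s+w)"
        proof -
          have pr: "1 \<le> w" "1 \<le> s - w" "w + (s - w) = s" using w1 by auto
          have X: "R w (s-w) = - R (n+1-(s-w)) (n-w)" by (rule eq1[OF pr])
          have Y: "R (n+1-(s-w)) (n-w) = - R (n-w) (n+1-(s-w))"
            using anti[of "n+1-(s-w)" "n-w"] w1 sn by simp
          have e: "n+1-(s-w) = n+1-s+w" using w1 sn by auto
          show ?thesis using X Y unfolding e by simp
        qed
        show ?thesis using A B Suc.IH w1 by simp
      qed
    qed
    have c0: "R 1 (s-1) = 0"
    proof -
      have "R (s-1) (s-(s-1)) = R 1 (s-1)" using chain[of "s-1"] s2 by simp
      moreover have "s-(s-1) = 1" using s2 by simp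
      moreover have "R (s-1) 1 = - R 1 (s-1)" using anti[of "s-1" 1] s2 sn by simp
      ultimately show ?thesis by simp
    qed
    have lev: "R u (s-u) = 0" if "1 \<le> u" "u \<le> s-1" for u
      using chain[OF that] c0 by simp
    show ?thesis unfolding P_def
    proof (intro allI impI)
      fix u v assume h: "1 \<le> u" "u \<le> n" "1 \<le> v" "v \<le> n" "u + v = s \<or> u + v = 2 * n + 1 - s"
      show "R u v = 0"
      proof (cases "u + v = s")
        case True
        have "v = s - u" "u \<le> s - 1" using True h by auto
        then show ?thesis using lev[of u] h by simp
      next
        case False
        then have uv: "u + v = 2*n+1-s" using h by simp
        show ?thesis
        proof (cases "u = n")
          case True
          have pr: "1 \<le> s-1" "1 \<le> (1::nat)" "(s-1) + 1 = s" using s2 by auto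
          have "R (s-1) 1 = - R (n+1-1) (n-(s-1))" by (rule eq1[OF pr])
          moreover have "R (s-1) 1 = 0" using lev[of "s-1"] s2 by (simp add: numeral_2_eq_2)
          moreover have "v = n-(s-1)" using uv True sn s2 by arith
          ultimately show ?thesis using True by simp
        next
          case False
          define w where "w = n - u"
          have w1: "1 \<le> w" "w \<le> s-1" using False h uv sn unfolding w_def by auto
          have pr: "1 \<le> w" "1 \<le> s - w" "w + (s - w) = s" using w1 by auto
          have "R w (s-w) = - R (n+1-(s-w)) (n-w)" by (rule eq1[OF pr])
          moreover have "R (n+1-(s-w)) (n-w) = - R (n-w) (n+1-(s-w))" using anti[of "n+1-(s-w)" "n-w"] w1 sn by simp
          moreover have "n-w = u" "n+1-(s-w) = v" using w1 h uv sn unfolding w_def by auto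
          ultimately show ?thesis using lev[OF w1] by simp
        qed
      qed
    qed
  qed
  have Pall: "P s" if "1 \<le> s" "s \<le> n" for s
    using that
  proof (induction s)
    case 0 then show ?case by simp
  next
    case (Suc t)
    show ?case
    proof (cases "t = 0")
      case True then show ?thesis using P1 by simp
    next
      case False
      then show ?thesis using Pstep[of "Suc t"] Suc by simp
    qed
  qed
  fix u v assume h: "1\<le>u" "u\<le>n" "1\<le>v" "v\<le>n"
  show "R u v = 0"
  proof (cases "u + v \<le> n")
    case True
    then show ?thesis using Pall[of "u+v"] h unfolding P_def by auto
  next
    case False
    then show ?thesis using Pall[of "2*n+1-(u+v)"] h unfolding P_def by auto
  qed
qed

lemma sum_last: "1 \<le> (j::nat) \<Longrightarrow> (\<Sum>i=1..j. g i) = (\<Sum>i=1..j-1. g i) + (g j :: complex)"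
  by (cases j) (auto simp: sum.cl_ivl_Suc)

lemma prefix_zero:
  fixes r :: "nat \<Rightarrow> complex"
  assumes "\<And>l. 1 \<le> l \<Longrightarrow> l \<le> n \<Longrightarrow> (\<Sum>j=1..l. r j) = 0"
  shows "\<And>j. 1 \<le> j \<Longrightarrow> j \<le> n \<Longrightarrow> r j = 0"
proof -
  fix j assume j: "1 \<le> j" "j \<le> n"
  have "(\<Sum>i=1..j. r i) = (\<Sum>i=1..j-1. r i) + r j" using sum_last[OF j(1)] .
  moreover have "(\<Sum>i=1..j. r i) = 0" using assms j by simp
  moreover have "(\<Sum>i=1..j-1. r i) = 0"
  proof (cases "j = 1")
    case True then show ?thesis by simp
  next
    case False then show ?thesis using assms[of "j-1"] j by simp
  qed
  ultimately show "r j = 0" by simp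
qed

lemma Z_f:
  fixes f :: "nat \<Rightarrow> nat \<Rightarrow> complex" and n :: nat
  assumes antiR: "\<And>u v. 1\<le>u \<Longrightarrow> u\<le>n \<Longrightarrow> 1\<le>v \<Longrightarrow> v\<le>n \<Longrightarrow>
                    (\<Sum>j=1..v. f u j) + (\<Sum>j=1..u. f v j) = 0"
    and tauf: "\<And>u j. 1\<le>u \<Longrightarrow> u\<le>n \<Longrightarrow> 1\<le>j \<Longrightarrow> j\<le>n \<Longrightarrow> f u j = f (n+1-j) (n+1-u)"
  shows "\<And>u j. 1\<le>u \<Longrightarrow> u\<le>n \<Longrightarrow> 1\<le>j \<Longrightarrow> j\<le>n \<Longrightarrow> f u j = 0"
proof -
  define R where "R u v = (\<Sum>j=1..v. f u j)" for u v
  have d: "R u j - R u (j-1) = f u j" if "1 \<le> j" for u j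
    unfolding R_def using sum_last[OF that, of "f u"] by simp
  have Rz: "R u v = 0" if "1\<le>u" "u\<le>n" "1\<le>v" "v\<le>n" for u v
  proof (rule Z_core[of n R])
    show "R u v = - R v u" if "1\<le>u" "u\<le>n" "1\<le>v" "v\<le>n" for u v
      using antiR[OF that] unfolding R_def by (simp add: eq_neg_iff_add_eq_0)
    show "R u 0 = 0" for u unfolding R_def by simp
    show "R u j - R u (j-1) = R (n+1-j) (n+1-u) - R (n+1-j) (n-u)"
      if "1\<le>u" "u\<le>n" "1\<le>j" "j\<le>n" for u j
    proof -
      have "R (n+1-j) (n+1-u) - R (n+1-j) (n+1-u-1) = f (n+1-j) (n+1-u)"
        using d[of "n+1-u" "n+1-j"] that by simp
      moreover have "n+1-u-1 = n-u" by simp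
      ultimately show ?thesis using d[of j u] tauf[OF that] that by simp
    qed
  qed (use that in auto)
  fix u j assume h: "1\<le>u" "u\<le>n" "1\<le>j" "j\<le>n"
  have "f u j = R u j - R u (j-1)" using d h by simp
  moreover have "R u j = 0" using Rz h by simp
  moreover have "R u (j-1) = 0"
  proof (cases "j = 1")
    case True then show ?thesis unfolding R_def by simp
  next
    case False then show ?thesis using Rz[of u "j-1"] h by simp
  qed
  ultimately show "f u j = 0" by simp
qed

lemma A0:
  fixes a :: "nat \<Rightarrow> nat \<Rightarrow> complex" and n :: nat
  assumes E: "\<And>p q. 1\<le>p \<Longrightarrow> p\<le>n \<Longrightarrow> 1\<le>q \<Longrightarrow> q\<le>n \<Longrightarrow>
               (\<Sum>i=1..n+1-q. a i p) = (\<Sum>j=1..n+1-p. a q j)"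
    and row1: "\<And>j. 1\<le>j \<Longrightarrow> j\<le>n \<Longrightarrow> a 1 j = 0"
  shows "\<And>i j. 1\<le>i \<Longrightarrow> i\<le>n \<Longrightarrow> 1\<le>j \<Longrightarrow> j\<le>n \<Longrightarrow> a i j = 0"
proof -
  have main: "\<forall>r j. 1\<le>r \<longrightarrow> r\<le>k \<longrightarrow> 1\<le>j \<longrightarrow> j\<le>n \<longrightarrow> a r j = 0" if "1 \<le> k" "k \<le> n" for k
    using that
  proof (induction k)
    case 0 then show ?case by simp
  next
    case (Suc k)
    show ?case
    proof (cases "k = 0")
      case True
      then show ?thesis using row1 by (auto dest: le_antisym)
    next
      case False
      then have k1: "1 \<le> k" "k+1 \<le> n" using Suc.prems by auto
      have IH: "\<And>r j. 1\<le>r \<Longrightarrow> r\<le>k \<Longrightarrow> 1\<le>j \<Longrightarrow> j\<le>n \<Longrightarrow> a r j = 0"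
        using Suc.IH k1 by auto
      have rowA: "a (n+1-k) j = 0" if "1 \<le> j" "j \<le> n" for j
      proof (rule prefix_zero[of n "a (n+1-k)"])
        fix l assume l: "1 \<le> l" "l \<le> n"
        have "(\<Sum>i=1..n+1-(n+1-k). a i (n+1-l)) = (\<Sum>j=1..n+1-(n+1-l). a (n+1-k) j)"
          using E[of "n+1-l" "n+1-k"] l k1 by simp
        moreover have "n+1-(n+1-k) = k" "n+1-(n+1-l) = l" using l k1 by auto
        moreover have "(\<Sum>i=1..k. a i (n+1-l)) = 0" using IH l by simp
        ultimately show "(\<Sum>j=1..l. a (n+1-k) j) = 0" by simp
      qed (use that in auto)
      have rowB: "a (k+1) j = 0" if "1 \<le> j" "j \<le> n" for j
      proof (rule prefix_zero[of n "a (k+1)"])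
        fix l assume l: "1 \<le> l" "l \<le> n"
        have e1: "(\<Sum>i=1..n+1-k. a i (n+1-l)) = (\<Sum>j=1..l. a k j)"
          using E[of "n+1-l" k] l k1 by simp
        have e2: "(\<Sum>i=1..n+1-(k+1). a i (n+1-l)) = (\<Sum>j=1..l. a (k+1) j)"
          using E[of "n+1-l" "k+1"] l k1 by simp
        have s: "(\<Sum>i=1..n+1-k. a i (n+1-l)) = (\<Sum>i=1..n+1-k-1. a i (n+1-l)) + a (n+1-k) (n+1-l)"
          using sum_last[of "n+1-k" "\<lambda>i. a i (n+1-l)"] k1 by simp
        have "n+1-k-1 = n+1-(k+1)" by simp
        moreover have "a (n+1-k) (n+1-l) = 0" using rowA l by simp
        moreover have "(\<Sum>j=1..l. a k j) = 0" using IH[of k] k1 l by simp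
        ultimately show "(\<Sum>j=1..l. a (k+1) j) = 0" using e1 e2 s by simp
      qed (use that in auto)
      show ?thesis
      proof (intro allI impI)
        fix r j assume h: "1 \<le> r" "r \<le> Suc k" "1 \<le> j" "j \<le> n"
        show "a r j = 0"
        proof (cases "r = Suc k")
          case True then show ?thesis using rowB h by simp
        next
          case False then show ?thesis using IH h by simp
        qed
      qed
    qed
  qed
  fix i j assume h: "1\<le>i" "i\<le>n" "1\<le>j" "j\<le>n"
  show "a i j = 0" using main[of n] h by auto
qed

lemma plus2: "((f::nat\<Rightarrow>nat\<Rightarrow>complex) + g) i j = f i j + g i j" by (simp add: plus_fun_def)
lemma minus2: "((f::nat\<Rightarrow>nat\<Rightarrow>complex) - g) i j = f i j - g i j" by (simp add: fun_diff_def)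
lemma zero2: "(0::nat\<Rightarrow>nat\<Rightarrow>complex) i j = 0" by (simp add: zero_fun_def)
lemma mscale2: "mscale c f i j = c * f i j" by (simp add: mscale_def)

lemma sum2: "(\<Sum>x\<in>A. (f x :: nat\<Rightarrow>nat\<Rightarrow>complex)) i j = (\<Sum>x\<in>A. f x i j)"
proof (induction A rule: infinite_finite_induct)
  case (infinite A) then show ?case by (simp add: zero2)
next
  case empty then show ?case by (simp add: zero2)
next
  case (insert x F) then show ?case by (simp add: plus2)
qed

interpretation vs: vector_space mscale
  by unfold_locales (auto simp: mscale_def plus_fun_def algebra_simps fun_eq_iff)

lemma mmult_add_left: "mmult m (X + X') Y = mmult m X Y + mmult m X' Y"
  by (rule ext)+ (simp add: mmult_def plus2 distrib_right sum.distrib)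
lemma mmult_add_right: "mmult m Y (X + X') = mmult m Y X + mmult m Y X'"
  by (rule ext)+ (simp add: mmult_def plus2 distrib_left sum.distrib)
lemma mmult_scale_left: "mmult m (mscale c X) Y = mscale c (mmult m X Y)"
  by (rule ext)+ (simp add: mmult_def mscale2 sum_distrib_left mult.assoc)
lemma mmult_scale_right: "mmult m Y (mscale c X) = mscale c (mmult m Y X)"
  by (rule ext)+ (simp add: mmult_def mscale2 sum_distrib_left algebra_simps)

lemma lie_add_left: "lie_bracket m (X + X') Y = lie_bracket m X Y + lie_bracket m X' Y"
  by (rule ext)+ (simp add: lie_bracket_def mmult_add_left mmult_add_right plus2)
lemma lie_add_right: "lie_bracket m Y (X + X') = lie_bracket m Y X + lie_bracket m Y X'"
  by (rule ext)+ (simp add: lie_bracket_def mmult_add_left mmult_add_right plus2)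
lemma lie_scale_left: "lie_bracket m (mscale c X) Y = mscale c (lie_bracket m X Y)"
  by (rule ext)+ (simp add: lie_bracket_def mmult_scale_left mmult_scale_right mscale2 algebra_simps)
lemma lie_scale_right: "lie_bracket m Y (mscale c X) = mscale c (lie_bracket m Y X)"
  by (rule ext)+ (simp add: lie_bracket_def mmult_scale_left mmult_scale_right mscale2 algebra_simps)
lemma lie_zero_left: "lie_bracket m 0 Y = 0"
  by (rule ext)+ (simp add: lie_bracket_def mmult_def zero2)

lemma F_add: "F n (X + Y) = F n X + F n Y"
  by (simp add: F_def plus2 sum.distrib)
lemma F_scale: "F n (mscale c X) = c * F n X"
  by (simp add: F_def mscale2 sum_distrib_left)
lemma F_zero: "F n 0 = 0"
  by (simp add: F_def zero2)

lemma sp_add: "X \<in> sp n \<Longrightarrow> Y \<in> sp n \<Longrightarrow> X + Y \<in> sp n"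
  unfolding sp_def by (auto simp: plus2 algebra_simps)
lemma sp_scale: "X \<in> sp n \<Longrightarrow> mscale c X \<in> sp n"
  unfolding sp_def by (auto simp: mscale2 algebra_simps)
lemma sp_zero: "0 \<in> sp n"
  unfolding sp_def by (auto simp: zero2)

lemma kernel_subspace: "vs.subspace (kirillov_kernel n)"
  unfolding vs.subspace_def kirillov_kernel_def
  by (auto simp: sp_add sp_scale sp_zero lie_add_left lie_scale_left lie_zero_left F_add F_scale F_zero)

definition unitm :: "nat \<Rightarrow> nat \<Rightarrow> nat \<Rightarrow> nat \<Rightarrow> complex" where
  "unitm p q = (\<lambda>i j. if i = p \<and> j = q then 1 else 0)"

lemma mm_unit_right:
  assumes "1 \<le> p" "p \<le> m"
  shows "mmult m X (unitm p q) i j = (if j = q then X i p else 0)"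
proof -
  have "mmult m X (unitm p q) i j = (\<Sum>k\<in>{1..m}. if k = p then (if j = q then X i k else 0) else 0)"
    unfolding mmult_def unitm_def by (rule sum.cong) auto
  also have "\<dots> = (if j = q then X i p else 0)" using assms by (simp add: sum.delta)
  finally show ?thesis .
qed

lemma mm_unit_left:
  assumes "1 \<le> q" "q \<le> m"
  shows "mmult m (unitm p q) X i j = (if i = p then X q j else 0)"
proof -
  have "mmult m (unitm p q) X i j = (\<Sum>k\<in>{1..m}. if k = q then (if i = p then X k j else 0) else 0)"
    unfolding mmult_def unitm_def by (rule sum.cong) auto
  also have "\<dots> = (if i = p then X q j else 0)" using assms by (simp add: sum.delta)
  finally show ?thesis .
qed

lemma lie_unit:
  assumes "1 \<le> p" "p \<le> 2*n" "1 \<le> q" "q \<le> 2*n"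
  shows "lie_bracket (2*n) x (unitm p q) i j = (if j = q then x i p else 0) - (if i = p then x q j else 0)"
  unfolding lie_bracket_def using mm_unit_right[of p "2*n" x q i j] mm_unit_left[of q "2*n" p x i j] assms by simp

lemma F_lie_unit:
  assumes "1 \<le> p" "p \<le> 2*n" "1 \<le> q" "q \<le> 2*n"
  shows "F n (lie_bracket (2*n) x (unitm p q)) =
    (\<Sum>i=1..n. if q + i \<le> n+1 then x i p else 0) - (if p \<le> n then (\<Sum>j=1..n+1-p. x q j) else 0)"
proof -
  have "F n (lie_bracket (2*n) x (unitm p q)) =
     (\<Sum>i=1..n. \<Sum>j=1..n+1-i. (if j = q then x i p else 0) - (if i = p then x q j else 0))"
    unfolding F_def lie_unit[OF assms] ..
  also have "\<dots> = (\<Sum>i=1..n. \<Sum>j=1..n+1-i. (if j = q then x i p else 0)) -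
                  (\<Sum>i=1..n. \<Sum>j=1..n+1-i. (if i = p then x q j else 0))"
    by (simp only: sum_subtractf)
  also have "(\<Sum>i=1..n. \<Sum>j=1..n+1-i. (if j = q then x i p else 0)) = (\<Sum>i=1..n. if q + i \<le> n+1 then x i p else 0)"
  proof (rule sum.cong[OF refl])
    fix i assume i: "i \<in> {1..n}"
    have "(\<Sum>j=1..n+1-i. (if j = q then x i p else 0)) = (if q \<in> {1..n+1-i} then x i p else 0)"
      by (rule sum.delta) simp
    moreover have "(q \<in> {1..n+1-i}) = (q + i \<le> n+1)" using i assms by auto
    ultimately show "(\<Sum>j=1..n+1-i. (if j = q then x i p else 0)) = (if q + i \<le> n+1 then x i p else 0)"
      by simp
  qed
  also have "(\<Sum>i=1..n. \<Sum>j=1..n+1-i. (if i = p then x q j else 0)) = (if p \<le> n then (\<Sum>j=1..n+1-p. x q j) else 0)"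
  proof -
    have "(\<Sum>i=1..n. \<Sum>j=1..n+1-i. (if i = p then x q j else 0)) = (\<Sum>i=1..n. if i = p then (\<Sum>j=1..n+1-i. x q j) else 0)"
      by (rule sum.cong) auto
    also have "\<dots> = (if p \<in> {1..n} then (\<Sum>j=1..n+1-p. x q j) else 0)" by (rule sum.delta) simp
    also have "(p \<in> {1..n}) = (p \<le> n)" using assms by auto
    finally show ?thesis .
  qed
  finally show ?thesis .
qed

lemma colsum_conv:
  assumes "1 \<le> q" "q \<le> (n::nat)"
  shows "(\<Sum>i=1..n. if q + i \<le> n+1 then (f i::complex) else 0) = (\<Sum>i=1..n+1-q. f i)"
proof -
  have "(\<Sum>i=1..n. if q + i \<le> n+1 then f i else 0) = (\<Sum>i\<in>{i\<in>{1..n}. q + i \<le> n+1}. f i)"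
    by (rule sum.inter_filter[symmetric]) simp
  also have "{i\<in>{1..n}. q + i \<le> n+1} = {1..n+1-q}" using assms by auto
  finally show ?thesis .
qed

lemma colsum_zero:
  assumes "(n::nat) < q"
  shows "(\<Sum>i=1..n. if q + i \<le> n+1 then (f i::complex) else 0) = 0"
proof (intro sum.neutral ballI)
  fix i assume "i \<in> {1..n}"
  then have "\<not> q + i \<le> n+1" using assms by simp
  then show "(if q + i \<le> n+1 then f i else 0) = 0" by simp
qed

definition sgn2 :: "nat \<Rightarrow> nat \<Rightarrow> nat \<Rightarrow> complex" where
  "sgn2 n p q = (if (p \<le> n) = (q \<le> n) then -1 else 1)"

definition ysp :: "nat \<Rightarrow> nat \<Rightarrow> nat \<Rightarrow> nat \<Rightarrow> nat \<Rightarrow> complex" where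
  "ysp n p q = unitm p q + mscale (sgn2 n p q) (unitm (2*n+1-q) (2*n+1-p))"

lemma ysp_apply: "ysp n p q i j = (if i = p \<and> j = q then 1 else 0) + sgn2 n p q * (if i = 2*n+1-q \<and> j = 2*n+1-p then 1 else 0)"
  unfolding ysp_def by (simp add: plus2 mscale2 unitm_def)

lemma ysp_sp:
  assumes "1 \<le> p" "p \<le> 2*n" "1 \<le> q" "q \<le> 2*n"
  shows "ysp n p q \<in> sp n"
  unfolding sp_def
proof (intro CollectI conjI allI impI ballI)
  fix i j assume h: "\<not> (i \<in> {1..2*n} \<and> j \<in> {1..2*n})"
  have m: "p \<in> {1..2*n}" "q \<in> {1..2*n}" "2*n+1-q \<in> {1..2*n}" "2*n+1-p \<in> {1..2*n}" using assms by auto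
  have c1: "\<not> (i = p \<and> j = q)"
  proof
    assume "i = p \<and> j = q"
    then have "i \<in> {1..2*n} \<and> j \<in> {1..2*n}" using m(1,2) by simp
    with h show False by simp
  qed
  have c2: "\<not> (i = 2*n+1-q \<and> j = 2*n+1-p)"
  proof
    assume "i = 2*n+1-q \<and> j = 2*n+1-p"
    then have "i \<in> {1..2*n} \<and> j \<in> {1..2*n}" using m(3,4) by simp
    with h show False by simp
  qed
  show "ysp n p q i j = 0" unfolding ysp_apply if_not_P[OF c1] if_not_P[OF c2] by simp
next
  fix i j assume i: "i \<in> {1..2*n}" and j: "j \<in> {1..2*n}"
  define s where "s = sgn2 n p q"
  define A where "A = (if i = p \<and> j = q then 1 else 0 :: complex)"
  define B where "B = (if i = 2*n+1-q \<and> j = 2*n+1-p then 1 else 0 :: complex)"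
  have ss: "s * s = 1" unfolding s_def by (simp add: sgn2_def)
  have e1: "(2*n+1-j = p \<and> 2*n+1-i = q) = (i = 2*n+1-q \<and> j = 2*n+1-p)" using i j assms by auto
  have e2: "(2*n+1-j = 2*n+1-q \<and> 2*n+1-i = 2*n+1-p) = (i = p \<and> j = q)" using i j assms by auto
  have r: "ysp n p q (2*n+1-j) (2*n+1-i) = B + s * A"
    unfolding ysp_apply e1 e2 A_def B_def s_def ..
  have l: "ysp n p q i j = A + s * B" unfolding ysp_apply A_def B_def s_def ..
  show "ysp n p q i j = (if (i \<le> n) = (j \<le> n) then -1 else 1) * ysp n p q (2*n+1-j) (2*n+1-i)"
  proof (cases "(i = p \<and> j = q) \<or> (i = 2*n+1-q \<and> j = 2*n+1-p)")
    case True
    have "(if (i \<le> n) = (j \<le> n) then -1 else 1) = s"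
      using True assms unfolding s_def sgn2_def by auto
    then show ?thesis unfolding l r using ss by (simp add: algebra_simps)
  next
    case False
    then have "A = 0" "B = 0" unfolding A_def B_def by auto
    then show ?thesis unfolding l r by simp
  qed
qed

lemma kernel_eq:
  assumes x: "x \<in> kirillov_kernel n" and "1 \<le> p" "p \<le> 2*n" "1 \<le> q" "q \<le> 2*n"
  shows "F n (lie_bracket (2*n) x (unitm p q)) + sgn2 n p q * F n (lie_bracket (2*n) x (unitm (2*n+1-q) (2*n+1-p))) = 0"
proof -
  have "F n (lie_bracket (2*n) x (ysp n p q)) = 0"
    using x ysp_sp[OF assms(2-5)] unfolding kirillov_kernel_def by auto
  then show ?thesis unfolding ysp_def by (simp add: lie_add_right lie_scale_right F_add F_scale)
qed

lemma kernel_A: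
  assumes x: "x \<in> kirillov_kernel n" and h: "1 \<le> p" "p \<le> n" "1 \<le> q" "q \<le> n"
  shows "(\<Sum>i=1..n+1-q. x i p) = (\<Sum>j=1..n+1-p. x q j)"
proof -
  have k: "F n (lie_bracket (2*n) x (unitm p q)) + sgn2 n p q * F n (lie_bracket (2*n) x (unitm (2*n+1-q) (2*n+1-p))) = 0"
    using kernel_eq[OF x] h by auto
  have r2: "F n (lie_bracket (2*n) x (unitm (2*n+1-q) (2*n+1-p))) =
     (\<Sum>i=1..n. if (2*n+1-p) + i \<le> n+1 then x i (2*n+1-q) else 0) - (if 2*n+1-q \<le> n then (\<Sum>j=1..n+1-(2*n+1-q). x (2*n+1-p) j) else 0)"
    by (rule F_lie_unit) (use h in auto)
  have c2: "(\<Sum>i=1..n. if (2*n+1-p) + i \<le> n+1 then x i (2*n+1-q) else 0) = 0"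
    by (rule colsum_zero) (use h in auto)
  have n2: "\<not> (2*n+1-q \<le> n)" using h by auto
  have r1: "F n (lie_bracket (2*n) x (unitm p q)) =
     (\<Sum>i=1..n. if q + i \<le> n+1 then x i p else 0) - (if p \<le> n then (\<Sum>j=1..n+1-p. x q j) else 0)"
    by (rule F_lie_unit) (use h in auto)
  have c1: "(\<Sum>i=1..n. if q + i \<le> n+1 then x i p else 0) = (\<Sum>i=1..n+1-q. x i p)"
    by (rule colsum_conv) (use h in auto)
  have G2: "F n (lie_bracket (2*n) x (unitm (2*n+1-q) (2*n+1-p))) = 0"
    using r2 c2 n2 by simp
  have G1: "F n (lie_bracket (2*n) x (unitm p q)) = (\<Sum>i=1..n+1-q. x i p) - (\<Sum>j=1..n+1-p. x q j)"
    using r1 c1 h(2) by simp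
  show ?thesis using k G1 G2 by simp
qed

lemma kernel_C:
  assumes x: "x \<in> kirillov_kernel n" and h: "1 \<le> u" "u \<le> n" "1 \<le> v" "v \<le> n"
  shows "(\<Sum>j=1..v. x (n+u) j) + (\<Sum>j=1..u. x (n+v) j) = 0"
proof -
  have k: "F n (lie_bracket (2*n) x (unitm (n+1-v) (n+u))) + sgn2 n (n+1-v) (n+u) * F n (lie_bracket (2*n) x (unitm (2*n+1-(n+u)) (2*n+1-(n+1-v)))) = 0"
    using kernel_eq[OF x, of "n+1-v" "n+u"] h by auto
  have e: "2*n+1-(n+u) = n+1-u" "2*n+1-(n+1-v) = n+v" "sgn2 n (n+1-v) (n+u) = 1"
    using h by (auto simp: sgn2_def)
  have kk: "F n (lie_bracket (2*n) x (unitm (n+1-v) (n+u))) + F n (lie_bracket (2*n) x (unitm (n+1-u) (n+v))) = 0"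
    using k unfolding e by simp
  have r1: "F n (lie_bracket (2*n) x (unitm (n+1-v) (n+u))) =
     (\<Sum>i=1..n. if (n+u) + i \<le> n+1 then x i (n+1-v) else 0) - (if n+1-v \<le> n then (\<Sum>j=1..n+1-(n+1-v). x (n+u) j) else 0)"
    by (rule F_lie_unit) (use h in auto)
  have c1: "(\<Sum>i=1..n. if (n+u) + i \<le> n+1 then x i (n+1-v) else 0) = 0"
    by (rule colsum_zero) (use h in auto)
  have r2: "F n (lie_bracket (2*n) x (unitm (n+1-u) (n+v))) =
     (\<Sum>i=1..n. if (n+v) + i \<le> n+1 then x i (n+1-u) else 0) - (if n+1-u \<le> n then (\<Sum>j=1..n+1-(n+1-u). x (n+v) j) else 0)"
    by (rule F_lie_unit) (use h in auto)
  have c2: "(\<Sum>i=1..n. if (n+v) + i \<le> n+1 then x i (n+1-u) else 0) = 0"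
    by (rule colsum_zero) (use h in auto)
  have ee: "n+1-(n+1-v) = v" "n+1-(n+1-u) = u" "n+1-v \<le> n" "n+1-u \<le> n" using h by auto
  have G1: "F n (lie_bracket (2*n) x (unitm (n+1-v) (n+u))) = - (\<Sum>j=1..v. x (n+u) j)"
    using r1 c1 ee by simp
  have G2: "F n (lie_bracket (2*n) x (unitm (n+1-u) (n+v))) = - (\<Sum>j=1..u. x (n+v) j)"
    using r2 c2 ee by simp
  have "(\<Sum>j=1..v. x (n+u) j) + (\<Sum>j=1..u. x (n+v) j) = - (F n (lie_bracket (2*n) x (unitm (n+1-v) (n+u))) + F n (lie_bracket (2*n) x (unitm (n+1-u) (n+v))))"
    unfolding G1 G2 by simp
  also have "\<dots> = 0" unfolding kk by simp
  finally show ?thesis .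
qed

lemma kernel_B:
  assumes x: "x \<in> kirillov_kernel n" and h: "1 \<le> u" "u \<le> n" "1 \<le> v" "v \<le> n"
  shows "(\<Sum>i=1..v. x i (n+u)) + (\<Sum>i=1..u. x i (n+v)) = 0"
proof -
  have k: "F n (lie_bracket (2*n) x (unitm (n+u) (n+1-v))) + sgn2 n (n+u) (n+1-v) * F n (lie_bracket (2*n) x (unitm (2*n+1-(n+1-v)) (2*n+1-(n+u)))) = 0"
    using kernel_eq[OF x, of "n+u" "n+1-v"] h by auto
  have e: "2*n+1-(n+u) = n+1-u" "2*n+1-(n+1-v) = n+v" "sgn2 n (n+u) (n+1-v) = 1"
    using h by (auto simp: sgn2_def)
  have kk: "F n (lie_bracket (2*n) x (unitm (n+u) (n+1-v))) + F n (lie_bracket (2*n) x (unitm (n+v) (n+1-u))) = 0"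
    using k unfolding e by simp
  have r1: "F n (lie_bracket (2*n) x (unitm (n+u) (n+1-v))) =
     (\<Sum>i=1..n. if (n+1-v) + i \<le> n+1 then x i (n+u) else 0) - (if n+u \<le> n then (\<Sum>j=1..n+1-(n+u). x (n+1-v) j) else 0)"
    by (rule F_lie_unit) (use h in auto)
  have c1: "(\<Sum>i=1..n. if (n+1-v) + i \<le> n+1 then x i (n+u) else 0) = (\<Sum>i=1..n+1-(n+1-v). x i (n+u))"
    by (rule colsum_conv) (use h in auto)
  have r2: "F n (lie_bracket (2*n) x (unitm (n+v) (n+1-u))) =
     (\<Sum>i=1..n. if (n+1-u) + i \<le> n+1 then x i (n+v) else 0) - (if n+v \<le> n then (\<Sum>j=1..n+1-(n+v). x (n+1-u) j) else 0)"
    by (rule F_lie_unit) (use h in auto)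
  have c2: "(\<Sum>i=1..n. if (n+1-u) + i \<le> n+1 then x i (n+v) else 0) = (\<Sum>i=1..n+1-(n+1-u). x i (n+v))"
    by (rule colsum_conv) (use h in auto)
  have ee: "n+1-(n+1-v) = v" "n+1-(n+1-u) = u" "\<not> n+u \<le> n" "\<not> n+v \<le> n" using h by auto
  have G1: "F n (lie_bracket (2*n) x (unitm (n+u) (n+1-v))) = (\<Sum>i=1..v. x i (n+u))"
    using r1 c1 ee by simp
  have G2: "F n (lie_bracket (2*n) x (unitm (n+v) (n+1-u))) = (\<Sum>i=1..u. x i (n+v))"
    using r2 c2 ee by simp
  show ?thesis using kk unfolding G1 G2 .
qed

lemma swap3: "(\<Sum>i\<in>A. \<Sum>j\<in>B. \<Sum>k\<in>C. (f i j k::complex)) = (\<Sum>k\<in>C. \<Sum>j\<in>B. \<Sum>i\<in>A. f i j k)"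
proof -
  have "(\<Sum>i\<in>A. \<Sum>j\<in>B. \<Sum>k\<in>C. f i j k) = (\<Sum>i\<in>A. \<Sum>k\<in>C. \<Sum>j\<in>B. f i j k)"
    by (rule sum.cong[OF refl]) (rule sum.swap)
  also have "\<dots> = (\<Sum>k\<in>C. \<Sum>i\<in>A. \<Sum>j\<in>B. f i j k)" by (rule sum.swap)
  also have "\<dots> = (\<Sum>k\<in>C. \<Sum>j\<in>B. \<Sum>i\<in>A. f i j k)"
    by (rule sum.cong[OF refl]) (rule sum.swap)
  finally show ?thesis .
qed

lemma mmult_restrict:
  assumes "\<And>k. n < k \<Longrightarrow> k \<le> 2*n \<Longrightarrow> X i k * Y k j = 0"
  shows "mmult (2*n) X Y i j = (\<Sum>k=1..n. X i k * Y k j)"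
proof -
  have u: "{1..2*n} = {1..n} \<union> {n+1..2*n}" by auto
  have "mmult (2*n) X Y i j = (\<Sum>k\<in>{1..n}. X i k * Y k j) + (\<Sum>k\<in>{n+1..2*n}. X i k * Y k j)"
    unfolding mmult_def u by (rule sum.union_disjoint) auto
  moreover have "(\<Sum>k\<in>{n+1..2*n}. X i k * Y k j) = 0"
    by (rule sum.neutral) (use assms in auto)
  ultimately show ?thesis by simp
qed

lemma commute_F:
  fixes a x y :: "nat \<Rightarrow> nat \<Rightarrow> complex" and n :: nat
  assumes E: "\<And>p q. 1\<le>p \<Longrightarrow> p\<le>n \<Longrightarrow> 1\<le>q \<Longrightarrow> q\<le>n \<Longrightarrow>
               (\<Sum>i=1..n+1-q. a i p) = (\<Sum>j=1..n+1-p. a q j)"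
    and xa: "\<And>i j. 1\<le>i \<Longrightarrow> i\<le>n \<Longrightarrow> 1\<le>j \<Longrightarrow> j\<le>n \<Longrightarrow> x i j = a i j"
    and xB: "\<And>i k. 1\<le>i \<Longrightarrow> i\<le>n \<Longrightarrow> n<k \<Longrightarrow> x i k = 0"
    and xC: "\<And>k j. n<k \<Longrightarrow> 1\<le>j \<Longrightarrow> j\<le>n \<Longrightarrow> x k j = 0"
  shows "F n (lie_bracket (2*n) x y) = 0"
proof -
  let ?I = "{1..n}"
  define c where "c i j = (if i + j \<le> n+1 then 1 else 0 :: complex)" for i j
  have cX: "c i j * X = (if i + j \<le> n+1 then X else 0)" for i j X unfolding c_def by simp
  have m1: "mmult (2*n) x y i j = (\<Sum>k\<in>?I. a i k * y k j)" if "1 \<le> i" "i \<le> n" for i j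
  proof -
    have "mmult (2*n) x y i j = (\<Sum>k=1..n. x i k * y k j)"
      by (rule mmult_restrict) (use xB that in auto)
    also have "\<dots> = (\<Sum>k\<in>?I. a i k * y k j)" by (rule sum.cong) (use xa that in auto)
    finally show ?thesis .
  qed
  have m2: "mmult (2*n) y x i j = (\<Sum>k\<in>?I. y i k * a k j)" if "1 \<le> j" "j \<le> n" for i j
  proof -
    have "mmult (2*n) y x i j = (\<Sum>k=1..n. y i k * x k j)"
      by (rule mmult_restrict) (use xC that in auto)
    also have "\<dots> = (\<Sum>k\<in>?I. y i k * a k j)" by (rule sum.cong) (use xa that in auto)
    finally show ?thesis .
  qed
  have "F n (lie_bracket (2*n) x y) = (\<Sum>i\<in>?I. \<Sum>j=1..n+1-i. (\<Sum>k\<in>?I. a i k * y k j) - (\<Sum>k\<in>?I. y i k * a k j))"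
    unfolding F_def lie_bracket_def
  proof (rule sum.cong[OF refl], rule sum.cong[OF refl])
    fix i j assume i: "i \<in> ?I" and j: "j \<in> {1..n+1-i}"
    then show "mmult (2*n) x y i j - mmult (2*n) y x i j = (\<Sum>k\<in>?I. a i k * y k j) - (\<Sum>k\<in>?I. y i k * a k j)"
      using m1[of i j] m2[of j i] by auto
  qed
  also have "\<dots> = (\<Sum>i\<in>?I. \<Sum>j\<in>?I. c i j * ((\<Sum>k\<in>?I. a i k * y k j) - (\<Sum>k\<in>?I. y i k * a k j)))"
  proof (rule sum.cong[OF refl])
    fix i assume i: "i \<in> ?I"
    have "(\<Sum>j\<in>?I. if i + j \<le> n+1 then ((\<Sum>k\<in>?I. a i k * y k j) - (\<Sum>k\<in>?I. y i k * a k j)) else 0) =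
          (\<Sum>j=1..n+1-i. (\<Sum>k\<in>?I. a i k * y k j) - (\<Sum>k\<in>?I. y i k * a k j))"
      by (rule colsum_conv) (use i in auto)
    then show "(\<Sum>j=1..n+1-i. (\<Sum>k\<in>?I. a i k * y k j) - (\<Sum>k\<in>?I. y i k * a k j)) =
          (\<Sum>j\<in>?I. c i j * ((\<Sum>k\<in>?I. a i k * y k j) - (\<Sum>k\<in>?I. y i k * a k j)))"
      unfolding cX by simp
  qed
  also have "\<dots> = (\<Sum>i\<in>?I. \<Sum>j\<in>?I. \<Sum>k\<in>?I. c i j * (a i k * y k j)) - (\<Sum>i\<in>?I. \<Sum>j\<in>?I. \<Sum>k\<in>?I. c i j * (y i k * a k j))"
    by (simp add: right_diff_distrib sum_distrib_left sum_subtractf)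
  also have "(\<Sum>i\<in>?I. \<Sum>j\<in>?I. \<Sum>k\<in>?I. c i j * (a i k * y k j)) = (\<Sum>k\<in>?I. \<Sum>j\<in>?I. y k j * (\<Sum>i=1..n+1-j. a i k))"
  proof -
    have "(\<Sum>i\<in>?I. \<Sum>j\<in>?I. \<Sum>k\<in>?I. c i j * (a i k * y k j)) = (\<Sum>k\<in>?I. \<Sum>j\<in>?I. \<Sum>i\<in>?I. c i j * (a i k * y k j))"
      by (rule swap3)
    also have "\<dots> = (\<Sum>k\<in>?I. \<Sum>j\<in>?I. y k j * (\<Sum>i\<in>?I. if j + i \<le> n+1 then a i k else 0))"
      unfolding sum_distrib_left
      by (intro sum.cong refl) (auto simp: cX add.commute)
    also have "\<dots> = (\<Sum>k\<in>?I. \<Sum>j\<in>?I. y k j * (\<Sum>i=1..n+1-j. a i k))"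
    proof (rule sum.cong[OF refl], rule sum.cong[OF refl])
      fix k j assume "j \<in> ?I"
      then have "(\<Sum>i\<in>?I. if j + i \<le> n+1 then a i k else 0) = (\<Sum>i=1..n+1-j. a i k)"
        by (intro colsum_conv) auto
      then show "y k j * (\<Sum>i\<in>?I. if j + i \<le> n+1 then a i k else 0) = y k j * (\<Sum>i=1..n+1-j. a i k)" by simp
    qed
    finally show ?thesis .
  qed
  also have "(\<Sum>i\<in>?I. \<Sum>j\<in>?I. \<Sum>k\<in>?I. c i j * (y i k * a k j)) = (\<Sum>i\<in>?I. \<Sum>k\<in>?I. y i k * (\<Sum>j=1..n+1-i. a k j))"
  proof -
    have "(\<Sum>i\<in>?I. \<Sum>j\<in>?I. \<Sum>k\<in>?I. c i j * (y i k * a k j)) = (\<Sum>i\<in>?I. \<Sum>k\<in>?I. \<Sum>j\<in>?I. c i j * (y i k * a k j))"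
      by (rule sum.cong[OF refl]) (rule sum.swap)
    also have "\<dots> = (\<Sum>i\<in>?I. \<Sum>k\<in>?I. y i k * (\<Sum>j\<in>?I. if i + j \<le> n+1 then a k j else 0))"
      unfolding sum_distrib_left
      by (intro sum.cong refl) (auto simp: cX)
    also have "\<dots> = (\<Sum>i\<in>?I. \<Sum>k\<in>?I. y i k * (\<Sum>j=1..n+1-i. a k j))"
    proof (rule sum.cong[OF refl], rule sum.cong[OF refl])
      fix i k assume "i \<in> ?I"
      then have "(\<Sum>j\<in>?I. if i + j \<le> n+1 then a k j else 0) = (\<Sum>j=1..n+1-i. a k j)"
        by (intro colsum_conv) auto
      then show "y i k * (\<Sum>j\<in>?I. if i + j \<le> n+1 then a k j else 0) = y i k * (\<Sum>j=1..n+1-i. a k j)" by simp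
    qed
    finally show ?thesis .
  qed
  also have "(\<Sum>k\<in>?I. \<Sum>j\<in>?I. y k j * (\<Sum>i=1..n+1-j. a i k)) = (\<Sum>i\<in>?I. \<Sum>k\<in>?I. y i k * (\<Sum>j=1..n+1-i. a k j))"
  proof (rule sum.cong[OF refl], rule sum.cong[OF refl])
    fix k j assume "k \<in> ?I" "j \<in> ?I"
    then show "y k j * (\<Sum>i=1..n+1-j. a i k) = y k j * (\<Sum>l=1..n+1-k. a j l)"
      using E[of k j] by simp
  qed
  finally show ?thesis by simp
qed

definition PhiI :: "int \<Rightarrow> int \<Rightarrow> int \<Rightarrow> int \<Rightarrow> int" where
 "PhiI n m p q = max 0 (min m (min (n+1 - max p q) ((n+m+2-p-q) div 2)))"

definition Pz :: "int \<Rightarrow> int \<Rightarrow> int \<Rightarrow> int \<Rightarrow> bool" where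
 "Pz n m i j = (i + j \<le> m+1 \<or> (even (i+j+m+1) \<and> i+1 \<le> j + m \<and> j+1 \<le> i + m \<and> i+j+m \<le> 2*n+2))"

lemma phi_step:
  fixes i j m n :: int
  assumes "1 \<le> i" "i \<le> n" "1 \<le> j" "j \<le> n" "0 \<le> m" "m \<le> n"
  shows "PhiI n m i (n+1-j) = PhiI n m i (n+2-j) + (if Pz n m i j then 1 else 0)"
proof -
  define d where "d = (m+1+j-i) div 2"
  define r where "r = (m+1+j-i) mod 2"
  have dr: "m+1+j-i = 2*d + r" unfolding d_def r_def by simp
  have r01: "r = 0 \<or> r = 1" unfolding r_def by auto
  have e: "even (i+j+m+1) = (r = 0)" using dr r01 by presburger
  have d1: "(n+m+2-i-(n+1-j)) div 2 = d" unfolding d_def by (simp add: algebra_simps)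
  have d2: "(n+m+2-i-(n+2-j)) div 2 = (if r = 0 then d - 1 else d)"
    using dr r01 by (auto simp: algebra_simps)
  show ?thesis
  proof (cases "r = 0")
    case True
    show ?thesis
    proof (cases "i \<le> n+1-j")
      case True
      then have mx: "max i (n+1-j) = n+1-j" "max i (n+2-j) = n+2-j" by auto
      show ?thesis unfolding PhiI_def Pz_def d1 d2 e mx using assms dr `r=0` True by smt
    next
      case False
      then have mx: "max i (n+1-j) = i" "max i (n+2-j) = i" by auto
      show ?thesis unfolding PhiI_def Pz_def d1 d2 e mx using assms dr `r=0` False by smt
    qed
  next
    case False
    then have r1: "r = 1" using r01 by auto
    show ?thesis
    proof (cases "i \<le> n+1-j")
      case True
      then have mx: "max i (n+1-j) = n+1-j" "max i (n+2-j) = n+2-j" by auto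
      show ?thesis unfolding PhiI_def Pz_def d1 d2 e mx using assms dr r1 True by smt
    next
      case False
      then have mx: "max i (n+1-j) = i" "max i (n+2-j) = i" by auto
      show ?thesis unfolding PhiI_def Pz_def d1 d2 e mx using assms dr r1 False by smt
    qed
  qed
qed

definition aM :: "nat \<Rightarrow> nat \<Rightarrow> nat \<Rightarrow> nat \<Rightarrow> complex" where
  "aM n m i j = of_int (PhiI (int n) (int m) (int i) (int n + 1 - int j) - PhiI (int n) (int m) (int i) (int n + 2 - int j))"

lemma aM_P:
  assumes "1 \<le> i" "i \<le> n" "1 \<le> j" "j \<le> n" "m \<le> n"
  shows "aM n m i j = (if Pz (int n) (int m) (int i) (int j) then 1 else 0)"
proof -
  have "PhiI (int n) (int m) (int i) (int n + 1 - int j) = PhiI (int n) (int m) (int i) (int n + 2 - int j) + (if Pz (int n) (int m) (int i) (int j) then 1 else 0)"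
    by (rule phi_step) (use assms in auto)
  then show ?thesis unfolding aM_def by simp
qed

lemma Pz_sym: "Pz n m i j = Pz n m j i"
  unfolding Pz_def by (auto simp: algebra_simps)

lemma aM_sym:
  assumes "1 \<le> i" "i \<le> n" "1 \<le> j" "j \<le> n" "m \<le> n"
  shows "aM n m i j = aM n m j i"
  using aM_P[OF assms] aM_P[of j n i m] assms Pz_sym by simp

lemma PhiI_sym: "PhiI n m p q = PhiI n m q p"
  unfolding PhiI_def by (simp add: max.commute algebra_simps)

lemma PhiI_top: "p \<le> n \<Longrightarrow> 0 \<le> m \<Longrightarrow> PhiI n m p (n+1) = 0"
proof -
  assume "p \<le> n"
  then have h: "n + 1 - max p (n+1) = 0" by simp
  have "min m (min 0 X) \<le> 0" for X :: int by (simp add: min_def)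
  then show ?thesis unfolding PhiI_def h by (simp add: max_absorb1)
qed

lemma aM_prefix:
  assumes "1 \<le> q" "q \<le> n" "m \<le> n"
  shows "l \<le> n \<Longrightarrow> (\<Sum>j=1..l. aM n m q j) = of_int (PhiI (int n) (int m) (int q) (int n + 1 - int l))"
proof (induction l)
  case 0
  then show ?case using PhiI_top[of "int q" "int n" "int m"] assms by simp
next
  case (Suc l)
  have "(\<Sum>j=1..Suc l. aM n m q j) = (\<Sum>j=1..l. aM n m q j) + aM n m q (Suc l)"
    by (simp add: sum.cl_ivl_Suc)
  also have "\<dots> = of_int (PhiI (int n) (int m) (int q) (int n + 1 - int l)) + aM n m q (Suc l)"
    using Suc by simp
  also have "\<dots> = of_int (PhiI (int n) (int m) (int q) (int n + 1 - int (Suc l)))"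
  proof -
    have e: "int n + 2 - int (Suc l) = int n + 1 - int l" by simp
    have "aM n m q (Suc l) = of_int (PhiI (int n) (int m) (int q) (int n + 1 - int (Suc l))) - of_int (PhiI (int n) (int m) (int q) (int n + 1 - int l))"
      unfolding aM_def e by (simp only: of_int_diff)
    then show ?thesis by simp
  qed
  finally show ?case .
qed

lemma aM_E:
  assumes "1\<le>p" "p\<le>n" "1\<le>q" "q\<le>n" "m \<le> n"
  shows "(\<Sum>i=1..n+1-q. aM n m i p) = (\<Sum>j=1..n+1-p. aM n m q j)"
proof -
  have "(\<Sum>i=1..n+1-q. aM n m i p) = (\<Sum>i=1..n+1-q. aM n m p i)"
    by (rule sum.cong[OF refl]) (use assms aM_sym in auto)
  also have "\<dots> = of_int (PhiI (int n) (int m) (int p) (int n + 1 - int (n+1-q)))"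
    by (rule aM_prefix) (use assms in auto)
  also have "int n + 1 - int (n+1-q) = int q" using assms by simp
  also have "(\<Sum>j=1..n+1-p. aM n m q j) = of_int (PhiI (int n) (int m) (int q) (int n + 1 - int (n+1-p)))"
    by (rule aM_prefix) (use assms in auto)
  moreover have "int n + 1 - int (n+1-p) = int p" using assms by simp
  ultimately show ?thesis using PhiI_sym by simp
qed

lemma aM_row1:
  assumes "1 \<le> j" "j \<le> n" "m \<le> n"
  shows "aM n m 1 j = (if j \<le> m then 1 else 0)"
proof -
  have "Pz (int n) (int m) 1 (int j) = (j \<le> m)" unfolding Pz_def by auto
  then show ?thesis using aM_P[of 1 n j m] assms by simp
qed

definition XM :: "nat \<Rightarrow> nat \<Rightarrow> nat \<Rightarrow> nat \<Rightarrow> complex" where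
  "XM n m = (\<lambda>i j. if 1 \<le> i \<and> i \<le> n \<and> 1 \<le> j \<and> j \<le> n then aM n m i j
      else if n < i \<and> i \<le> 2*n \<and> n < j \<and> j \<le> 2*n then - aM n m (2*n+1-j) (2*n+1-i) else 0)"

lemma XM_sp: "XM n m \<in> sp n"
  unfolding sp_def
proof (intro CollectI conjI allI impI ballI)
  fix i j assume "\<not> (i \<in> {1..2*n} \<and> j \<in> {1..2*n})"
  then show "XM n m i j = 0" unfolding XM_def by auto
next
  fix i j assume i: "i \<in> {1..2*n}" and j: "j \<in> {1..2*n}"
  show "XM n m i j = (if (i \<le> n) = (j \<le> n) then -1 else 1) * XM n m (2*n+1-j) (2*n+1-i)"
  proof (cases "i \<le> n")
    case True
    note iT = True
    show ?thesis
    proof (cases "j \<le> n")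
      case True
      have a: "XM n m i j = aM n m i j" unfolding XM_def using i j iT True by auto
      have e: "2*n+1-(2*n+1-i) = i" "2*n+1-(2*n+1-j) = j" using i j by auto
      have b: "XM n m (2*n+1-j) (2*n+1-i) = - aM n m i j"
        unfolding XM_def using i j iT True e by auto
      show ?thesis using a b iT True by simp
    next
      case False
      have "XM n m i j = 0" "XM n m (2*n+1-j) (2*n+1-i) = 0" unfolding XM_def using i j iT False by auto
      then show ?thesis by simp
    qed
  next
    case False
    note iF = False
    show ?thesis
    proof (cases "j \<le> n")
      case True
      have "XM n m i j = 0" "XM n m (2*n+1-j) (2*n+1-i) = 0" unfolding XM_def using i j iF True by auto
      then show ?thesis by simp
    next
      case False
      have a: "XM n m i j = - aM n m (2*n+1-j) (2*n+1-i)" unfolding XM_def using i j iF False by auto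
      have b: "XM n m (2*n+1-j) (2*n+1-i) = aM n m (2*n+1-j) (2*n+1-i)"
        unfolding XM_def using i j iF False by auto
      show ?thesis using a b iF False by simp
    qed
  qed
qed

lemma XM_ker:
  assumes "m \<le> n"
  shows "XM n m \<in> kirillov_kernel n"
  unfolding kirillov_kernel_def
proof (intro CollectI conjI ballI)
  show "XM n m \<in> sp n" by (rule XM_sp)
  fix y
  show "F n (lie_bracket (2*n) (XM n m) y) = 0"
  proof (rule commute_F[where a = "aM n m"])
    show "(\<Sum>i=1..n+1-q. aM n m i p) = (\<Sum>j=1..n+1-p. aM n m q j)"
      if "1\<le>p" "p\<le>n" "1\<le>q" "q\<le>n" for p q
      using aM_E that assms by simp
  qed (auto simp: XM_def)
qed

lemma sp_entry: "X \<in> sp n \<Longrightarrow> i \<in> {1..2*n} \<Longrightarrow> j \<in> {1..2*n} \<Longrightarrow>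
   X i j = (if (i \<le> n) = (j \<le> n) then -1 else 1) * X (2*n+1-j) (2*n+1-i)"
  unfolding sp_def by blast

lemma sp_out: "X \<in> sp n \<Longrightarrow> \<not> (i \<in> {1..2*n} \<and> j \<in> {1..2*n}) \<Longrightarrow> X i j = 0"
  unfolding sp_def by blast

lemma kernel_zero:
  assumes z: "z \<in> kirillov_kernel n" and row: "\<And>j. 1 \<le> j \<Longrightarrow> j \<le> n \<Longrightarrow> z 1 j = 0"
  shows "z = 0"
proof -
  have zsp: "z \<in> sp n" using z unfolding kirillov_kernel_def by auto
  have zA: "z i j = 0" if "1 \<le> i" "i \<le> n" "1 \<le> j" "j \<le> n" for i j
  proof (rule A0[of n z])
    show "(\<Sum>i=1..n+1-q. z i p) = (\<Sum>j=1..n+1-p. z q j)" if "1\<le>p" "p\<le>n" "1\<le>q" "q\<le>n" for p q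
      using kernel_A[OF z that] .
  qed (use row that in auto)
  have zC: "z (n+u) j = 0" if "1 \<le> u" "u \<le> n" "1 \<le> j" "j \<le> n" for u j
  proof (rule Z_f[of n "\<lambda>u j. z (n+u) j"])
    show "(\<Sum>j=1..v. z (n+u) j) + (\<Sum>j=1..u. z (n+v) j) = 0" if "1\<le>u" "u\<le>n" "1\<le>v" "v\<le>n" for u v
      using kernel_C[OF z that] .
    show "z (n+u) j = z (n+(n+1-j)) (n+1-u)" if "1\<le>u" "u\<le>n" "1\<le>j" "j\<le>n" for u j
    proof -
      have "z (n+u) j = (if (n+u \<le> n) = (j \<le> n) then -1 else 1) * z (2*n+1-j) (2*n+1-(n+u))"
        by (rule sp_entry[OF zsp]) (use that in auto)
      moreover have "2*n+1-j = n+(n+1-j)" "2*n+1-(n+u) = n+1-u" using that by auto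
      ultimately show ?thesis using that by simp
    qed
  qed (use that in auto)
  have zB: "z j (n+u) = 0" if "1 \<le> u" "u \<le> n" "1 \<le> j" "j \<le> n" for u j
  proof (rule Z_f[of n "\<lambda>u j. z j (n+u)"])
    show "(\<Sum>i=1..v. z i (n+u)) + (\<Sum>i=1..u. z i (n+v)) = 0" if "1\<le>u" "u\<le>n" "1\<le>v" "v\<le>n" for u v
      using kernel_B[OF z that] .
    show "z j (n+u) = z (n+1-u) (n+(n+1-j))" if "1\<le>u" "u\<le>n" "1\<le>j" "j\<le>n" for u j
    proof -
      have "z j (n+u) = (if (j \<le> n) = (n+u \<le> n) then -1 else 1) * z (2*n+1-(n+u)) (2*n+1-j)"
        by (rule sp_entry[OF zsp]) (use that in auto)
      moreover have "2*n+1-j = n+(n+1-j)" "2*n+1-(n+u) = n+1-u" using that by auto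
      ultimately show ?thesis using that by simp
    qed
  qed (use that in auto)
  show ?thesis
  proof (rule ext, rule ext)
    fix i j
    show "z i j = 0 i j"
    proof (cases "i \<in> {1..2*n} \<and> j \<in> {1..2*n}")
      case False
      then show ?thesis using sp_out[OF zsp False] by (simp add: zero2)
    next
      case True
      then have i: "1 \<le> i" "i \<le> 2*n" and j: "1 \<le> j" "j \<le> 2*n" by auto
      show ?thesis
      proof (cases "i \<le> n")
        case iT: True
        show ?thesis
        proof (cases "j \<le> n")
          case True then show ?thesis using zA i j iT by (simp add: zero2)
        next
          case False
          then have "z i (n + (j-n)) = 0" using zB[of "j-n" i] i j iT by simp
          then show ?thesis using False by (simp add: zero2)
        qed
      next
        case iF: False
        show ?thesis
        proof (cases "j \<le> n")
          case True
          then have "z (n + (i-n)) j = 0" using zC[of "i-n" j] i j iF by simp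
          then show ?thesis using iF by (simp add: zero2)
        next
          case False
          have "z i j = (if (i \<le> n) = (j \<le> n) then -1 else 1) * z (2*n+1-j) (2*n+1-i)"
            by (rule sp_entry[OF zsp]) (use i j in auto)
          moreover have "z (2*n+1-j) (2*n+1-i) = 0" by (rule zA) (use i j iF False in auto)
          ultimately show ?thesis by (simp add: zero2)
        qed
      qed
    qed
  qed
qed

definition YM :: "nat \<Rightarrow> nat \<Rightarrow> nat \<Rightarrow> nat \<Rightarrow> complex" where
  "YM n m = XM n m - XM n (m-1)"

lemma YM_ker: "m \<le> n \<Longrightarrow> YM n m \<in> kirillov_kernel n"
  unfolding YM_def by (rule vs.subspace_diff[OF kernel_subspace]) (auto intro: XM_ker)

lemma YM_row1:
  assumes "1 \<le> j" "j \<le> n" "1 \<le> m" "m \<le> n"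
  shows "YM n m 1 j = (if j = m then 1 else 0)"
proof -
  have "XM n m 1 j = (if j \<le> m then 1 else 0)" "XM n (m-1) 1 j = (if j \<le> m-1 then 1 else 0)"
    unfolding XM_def using aM_row1 assms by auto
  then show ?thesis unfolding YM_def using assms by (auto simp: minus2)
qed

theorem theorem4p9:
  fixes n :: nat
  assumes "n \<ge> 1"
  shows "vector_space.dim mscale (kirillov_kernel n) = n"
proof -
  define B where "B = YM n ` {1..n}"
  have inj: "inj_on (YM n) {1..n}"
  proof (rule inj_onI)
    fix a b assume a: "a \<in> {1..n}" and b: "b \<in> {1..n}" and e: "YM n a = YM n b"
    have "YM n a 1 a = 1" using YM_row1[of a n a] a by auto
    moreover have "YM n b 1 a = (if a = b then 1 else 0)" using YM_row1[of a n b] a b by auto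
    ultimately show "a = b" using e by (auto split: if_splits)
  qed
  have Bsub: "B \<subseteq> kirillov_kernel n" unfolding B_def using YM_ker by auto
  have indep: "vs.independent B"
  proof (rule vs.independent_if_scalars_zero)
    show "finite B" unfolding B_def by simp
    fix f x assume s: "(\<Sum>x\<in>B. mscale (f x) x) = 0" and x: "x \<in> B"
    then obtain m0 where m0: "m0 \<in> {1..n}" "x = YM n m0" unfolding B_def by auto
    have "0 = (\<Sum>x\<in>B. mscale (f x) x) 1 m0" using s by (simp add: zero2)
    also have "\<dots> = (\<Sum>x\<in>B. f x * x 1 m0)" by (simp add: sum2 mscale2)
    also have "\<dots> = (\<Sum>m\<in>{1..n}. f (YM n m) * YM n m 1 m0)"
      unfolding B_def by (simp only: sum.reindex[OF inj] o_def)
    also have "\<dots> = (\<Sum>m\<in>{1..n}. if m = m0 then f (YM n m) else 0)"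
      by (rule sum.cong[OF refl]) (use m0 YM_row1 in auto)
    also have "\<dots> = f (YM n m0)" using m0 by simp
    finally show "f x = 0" using m0 by simp
  qed
  have span: "kirillov_kernel n \<subseteq> vs.span B"
  proof
    fix x assume x: "x \<in> kirillov_kernel n"
    define S where "S = (\<Sum>m\<in>{1..n}. mscale (x 1 m) (YM n m))"
    have Sk: "S \<in> kirillov_kernel n" unfolding S_def
      by (intro vs.subspace_sum[OF kernel_subspace] vs.subspace_scale[OF kernel_subspace] YM_ker) auto
    have zk: "x - S \<in> kirillov_kernel n" by (rule vs.subspace_diff[OF kernel_subspace x Sk])
    have "x - S = 0"
    proof (rule kernel_zero[OF zk])
      fix j assume j: "1 \<le> j" "j \<le> n"
      have "S 1 j = (\<Sum>m\<in>{1..n}. x 1 m * YM n m 1 j)" unfolding S_def by (simp add: sum2 mscale2)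
      also have "\<dots> = (\<Sum>m\<in>{1..n}. if m = j then x 1 m else 0)"
        by (rule sum.cong[OF refl]) (use j YM_row1 in auto)
      also have "\<dots> = x 1 j" using j by simp
      finally show "(x - S) 1 j = 0" by (simp add: minus2)
    qed
    then have "x = S" by simp
    moreover have "S \<in> vs.span B" unfolding S_def B_def
      by (intro vs.span_sum vs.span_scale vs.span_base) auto
    ultimately show "x \<in> vs.span B" by simp
  qed
  have "vs.span B = kirillov_kernel n"
    by (rule vs.span_subspace[OF Bsub span kernel_subspace])
  then have "vs.dim (kirillov_kernel n) = vs.dim (vs.span B)" by simp
  also have "\<dots> = card B" by (rule vs.dim_span_eq_card_independent[OF indep])
  also have "\<dots> = n" unfolding B_def using card_image[OF inj] by simp
  finally show ?thesis .
qed

end
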